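(* Let $L$ be a Lie algebra over a field $K$ of characteristic different from $2$ and $3$. Define $u:Z^2_{comm}(L)\to ADer(L,L^* )$ by $(u(\varphi)(x))(y)=\varphi(x,y)$, and $v:ADer(L,L^* )\to C(L)$ by $v(d)(x,y)=d(x)(y)-d(y)(x)$, for $x,y\in L$. Then $u$ and $v$ are well-defined linear maps (i.e. $u(\varphi)$ is an antiderivation and $v(d)$ is a cyclic skew-symmetric form), and the sequence $$0\to Z^2_{comm}(L)\xrightarrow{u}ADer(L,L^* )\xrightarrow{v}C(L)$$ is exact, i.e. $u$ is injective and $\operatorname{Im}u=\operatorname{Ker}v$.
   Context: $Z^2_{comm}(L)$ is the space of commutative $2$-cocycles: symmetric bilinear forms $\varphi:L\times L\to K$ with $\varphi([x,y],z)+\varphi([z,x],y)+\varphi([y,z],x)=0$ for all $x,y,z\in L$. $L^*$ is the coadjoint module, with action $(x\bullet f)(y)=-f([x,y])$. For an $L$-module $M$, an antiderivation $d:L\to M$ is a linear map with $d([x,y])=y\bullet d(x)-x\bullet d(y)$ for all $x,y\in L$; $ADer(L,M)$ is the space of these. For $M=L^*$ this condition reads $d([x,y])(z)=d(x)([y,z])-d(y)([x,z])$ for all $x,y,z\in L$. A bilinear form $\psi$ on $L$ is cyclic if $\psi([x,y],z)=\psi([z,x],y)$ for all $x,y,z\in L$; $C(L)$ is the space of cyclic skew-symmetric bilinear forms on $L$. *)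

theory Defs
  imports Complex_Main "HOL-Library.Function_Algebras"
begin

definition lie_algebra :: "('k::field \<Rightarrow> 'v::ab_group_add \<Rightarrow> 'v) \<Rightarrow> ('v \<Rightarrow> 'v \<Rightarrow> 'v) \<Rightarrow> bool" where
  "lie_algebra s br \<longleftrightarrow>
     vector_space s \<and>
     (\<forall>x. Vector_Spaces.linear s s (br x)) \<and>
     (\<forall>y. Vector_Spaces.linear s s (\<lambda>x. br x y)) \<and>
     (\<forall>x. br x x = 0) \<and>
     (\<forall>x y z. br x (br y z) + br y (br z x) + br z (br x y) = 0)"

definition fscale :: "'k::field \<Rightarrow> ('v \<Rightarrow> 'k) \<Rightarrow> ('v \<Rightarrow> 'k)" where
  "fscale a f = (\<lambda>z. a * f z)"

definition dual_space :: "('k::field \<Rightarrow> 'v::ab_group_add \<Rightarrow> 'v) \<Rightarrow> ('v \<Rightarrow> 'k) set" where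
  "dual_space s = {f. Vector_Spaces.linear s (*) f}"

definition coad :: "('v \<Rightarrow> 'v \<Rightarrow> 'v) \<Rightarrow> 'v \<Rightarrow> ('v \<Rightarrow> 'k::field) \<Rightarrow> ('v \<Rightarrow> 'k)" where
  "coad br x f = (\<lambda>y. - f (br x y))"

definition bilinear_form :: "('k::field \<Rightarrow> 'v::ab_group_add \<Rightarrow> 'v) \<Rightarrow> ('v \<Rightarrow> 'v \<Rightarrow> 'k) \<Rightarrow> bool" where
  "bilinear_form s \<phi> \<longleftrightarrow>
     (\<forall>x. Vector_Spaces.linear s (*) (\<phi> x)) \<and> (\<forall>y. Vector_Spaces.linear s (*) (\<lambda>x. \<phi> x y))"

definition Z2comm :: "('k::field \<Rightarrow> 'v::ab_group_add \<Rightarrow> 'v) \<Rightarrow> ('v \<Rightarrow> 'v \<Rightarrow> 'v) \<Rightarrow> ('v \<Rightarrow> 'v \<Rightarrow> 'k) set" where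
  "Z2comm s br = {\<phi>. bilinear_form s \<phi> \<and> (\<forall>x y. \<phi> x y = \<phi> y x) \<and>
     (\<forall>x y z. \<phi> (br x y) z + \<phi> (br z x) y + \<phi> (br y z) x = 0)}"

definition ADer_coad :: "('k::field \<Rightarrow> 'v::ab_group_add \<Rightarrow> 'v) \<Rightarrow> ('v \<Rightarrow> 'v \<Rightarrow> 'v) \<Rightarrow> ('v \<Rightarrow> 'v \<Rightarrow> 'k) set" where
  "ADer_coad s br = {d. (\<forall>x. d x \<in> dual_space s) \<and> Vector_Spaces.linear s fscale d \<and>
     (\<forall>x y. d (br x y) = coad br y (d x) - coad br x (d y))}"

definition cyclic_forms :: "('k::field \<Rightarrow> 'v::ab_group_add \<Rightarrow> 'v) \<Rightarrow> ('v \<Rightarrow> 'v \<Rightarrow> 'v) \<Rightarrow> ('v \<Rightarrow> 'v \<Rightarrow> 'k) set" where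
  "cyclic_forms s br = {\<psi>. bilinear_form s \<psi> \<and> (\<forall>x y. \<psi> x y = - \<psi> y x) \<and>
     (\<forall>x y z. \<psi> (br x y) z = \<psi> (br z x) y)}"

definition u_map :: "('v \<Rightarrow> 'v \<Rightarrow> 'k) \<Rightarrow> ('v \<Rightarrow> 'v \<Rightarrow> 'k)" where
  "u_map \<phi> = (\<lambda>x. \<lambda>y. \<phi> x y)"

definition v_map :: "('v \<Rightarrow> 'v \<Rightarrow> 'k::ab_group_add) \<Rightarrow> ('v \<Rightarrow> 'v \<Rightarrow> 'k)" where
  "v_map d = (\<lambda>x y. d x y - d y x)"

end

theory Submission
  imports Defs
begin

lemma vs_mult: "vector_space ((*)::'k::field \<Rightarrow> 'k \<Rightarrow> 'k)"
  unfolding vector_space_def by (simp add: algebra_simps)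

lemma vs_fscale: "vector_space (fscale :: 'k::field \<Rightarrow> ('v \<Rightarrow> 'k) \<Rightarrow> ('v \<Rightarrow> 'k))"
  unfolding vector_space_def fscale_def by (simp add: fun_eq_iff algebra_simps)

lemma br_skew:
  assumes "lie_algebra s br" shows "br y x = - br x y"
proof -
  have a1: "\<And>x a b. br x (a + b) = br x a + br x b"
    using assms unfolding lie_algebra_def Vector_Spaces.linear_iff by blast
  have a2: "\<And>y a b. br (a + b) y = br a y + br b y"
    using assms unfolding lie_algebra_def Vector_Spaces.linear_iff by blast
  have a0: "\<And>x. br x x = 0" using assms unfolding lie_algebra_def by blast
  have "0 = br (x+y) (x+y)" using a0 by simp
  also have "\<dots> = br x x + br y x + (br x y + br y y)" by (simp add: a1 a2)
  also have "\<dots> = br y x + br x y" by (simp add: a0)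
  finally show ?thesis by (simp add: eq_neg_iff_add_eq_0 add.commute)
qed

lemma lin_add: "Vector_Spaces.linear s1 s2 f \<Longrightarrow> f (x + y) = f x + f y"
  unfolding Vector_Spaces.linear_iff by blast

lemma lin_neg: "Vector_Spaces.linear s1 s2 f \<Longrightarrow> f (- x) = - f x"
proof -
  assume "Vector_Spaces.linear s1 s2 f"
  then have "f (- x + x) = f (- x) + f x" by (rule lin_add)
  moreover have "f 0 = 0"
  proof -
    have "f (0 + 0) = f 0 + f 0" by (rule lin_add[OF \<open>Vector_Spaces.linear s1 s2 f\<close>])
    then show ?thesis by simp
  qed
  ultimately show ?thesis by (simp add: eq_neg_iff_add_eq_0)
qed

lemma lin3: "(a::'k::ab_group_add) + b + c = 0 \<Longrightarrow> b = - p \<Longrightarrow> c = q \<Longrightarrow> a = p - q"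
proof -
  assume h: "a + b + c = 0" "b = - p" "c = q"
  have "a = (a + b + c) - b - c" by (simp add: algebra_simps)
  also have "\<dots> = 0 - b - c" by (simp only: h(1))
  also have "\<dots> = 0 - (-p) - q" by (simp only: h(2,3))
  finally show ?thesis by simp
qed

theorem proposition1p3:
  fixes s :: "'k::field \<Rightarrow> 'v::ab_group_add \<Rightarrow> 'v"
    and br :: "'v \<Rightarrow> 'v \<Rightarrow> 'v"
  assumes "lie_algebra s br"
    and "(2::'k) \<noteq> 0" and "(3::'k) \<noteq> 0"
  shows "(\<forall>\<phi>\<in>Z2comm s br. u_map \<phi> \<in> ADer_coad s br)
    \<and> (\<forall>d\<in>ADer_coad s br. v_map d \<in> cyclic_forms s br)
    \<and> (\<forall>a b. \<forall>\<phi>\<in>Z2comm s br. \<forall>\<psi>\<in>Z2comm s br.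
          u_map (\<lambda>x y. a * \<phi> x y + b * \<psi> x y) = (\<lambda>x y. a * u_map \<phi> x y + b * u_map \<psi> x y))
    \<and> (\<forall>a b. \<forall>d\<in>ADer_coad s br. \<forall>e\<in>ADer_coad s br.
          v_map (\<lambda>x y. a * d x y + b * e x y) = (\<lambda>x y. a * v_map d x y + b * v_map e x y))
    \<and> inj_on u_map (Z2comm s br)
    \<and> u_map ` Z2comm s br = {d \<in> ADer_coad s br. v_map d = (\<lambda>x y. 0)}"
proof -
  have vs: "vector_space s" using assms(1) unfolding lie_algebra_def by blast
  have linb: "\<And>x. Vector_Spaces.linear s s (br x)" using assms(1) unfolding lie_algebra_def by blast
  have skew: "\<And>x y. br y x = - br x y" using br_skew[OF assms(1)] .
  have uid: "\<And>\<phi>. u_map \<phi> = \<phi>" unfolding u_map_def by simp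
  have P1: "\<phi> \<in> ADer_coad s br" if "\<phi> \<in> Z2comm s br" for \<phi>
  proof -
    have bl: "\<And>x. Vector_Spaces.linear s (*) (\<phi> x)" "\<And>y. Vector_Spaces.linear s (*) (\<lambda>x. \<phi> x y)"
      and sym: "\<And>x y. \<phi> x y = \<phi> y x"
      and coc: "\<And>x y z. \<phi> (br x y) z + \<phi> (br z x) y + \<phi> (br y z) x = 0"
      using that unfolding Z2comm_def bilinear_form_def by blast+
    have d1: "\<forall>x. \<phi> x \<in> dual_space s" using bl unfolding dual_space_def by blast
    have d2: "Vector_Spaces.linear s fscale \<phi>"
      unfolding Vector_Spaces.linear_iff
    proof (intro conjI allI vs vs_fscale)
      fix x y show "\<phi> (x + y) = \<phi> x + \<phi> y"
        using lin_add[OF bl(2)] by (simp add: fun_eq_iff)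
    next
      fix c x show "\<phi> (s c x) = fscale c (\<phi> x)"
        using bl(2) unfolding Vector_Spaces.linear_iff fscale_def by (simp add: fun_eq_iff)
    qed
    have d3: "\<phi> (br x y) = coad br y (\<phi> x) - coad br x (\<phi> y)" for x y
    proof (rule ext)
      fix z
      have "\<phi> (br z x) y = - \<phi> y (br x z)"
        using sym skew lin_neg[OF bl(1)] by metis
      moreover have "\<phi> (br y z) x = \<phi> x (br y z)" using sym by blast
      ultimately have "\<phi> (br x y) z = \<phi> y (br x z) - \<phi> x (br y z)"
        using coc[of x y z] lin3 by metis
      then show "\<phi> (br x y) z = (coad br y (\<phi> x) - coad br x (\<phi> y)) z"
        unfolding coad_def by simp
    qed
    show ?thesis unfolding ADer_coad_def using d1 d2 d3 by blast
  qed
  have AD: "Vector_Spaces.linear s (*) (d x) \<and> Vector_Spaces.linear s (*) (\<lambda>x. d x y)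
     \<and> d (br x y) z = d y (br x z) - d x (br y z)"
    if "d \<in> ADer_coad s br" for d x y z
  proof -
    have h1: "\<And>x. d x \<in> dual_space s" and h2: "Vector_Spaces.linear s fscale d"
      and h3: "\<And>x y. d (br x y) = coad br y (d x) - coad br x (d y)"
      using that unfolding ADer_coad_def by blast+
    have "Vector_Spaces.linear s (*) (d x)" using h1 unfolding dual_space_def by blast
    moreover have "Vector_Spaces.linear s (*) (\<lambda>x. d x y)"
      unfolding Vector_Spaces.linear_iff
    proof (intro conjI allI vs vs_mult)
      fix a b show "d (a + b) y = d a y + d b y" using lin_add[OF h2] by simp
    next
      fix c a show "d (s c a) y = c * d a y"
        using h2 unfolding Vector_Spaces.linear_iff fscale_def by simp
    qed
    moreover have "d (br x y) z = d y (br x z) - d x (br y z)"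
      using fun_cong[OF h3[of x y], of z] unfolding coad_def by simp
    ultimately show ?thesis by blast
  qed
  have gskew: "d a (br c b) = - d a (br b c)" if "d \<in> ADer_coad s br" for d a b c
    using AD[OF that, of a] skew lin_neg by metis
  have P2: "v_map d \<in> cyclic_forms s br" if dA: "d \<in> ADer_coad s br" for d
  proof -
    have bil: "bilinear_form s (v_map d)"
      unfolding bilinear_form_def v_map_def
    proof (intro conjI allI)
      fix x
      have l1: "Vector_Spaces.linear s (*) (d x)" "Vector_Spaces.linear s (*) (\<lambda>y. d y x)"
        using AD[OF dA] by blast+
      show "Vector_Spaces.linear s (*) (\<lambda>y. d x y - d y x)"
        using l1 unfolding Vector_Spaces.linear_iff by (simp add: algebra_simps)
    next
      fix y
      have l1: "Vector_Spaces.linear s (*) (d y)" "Vector_Spaces.linear s (*) (\<lambda>x. d x y)"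
        using AD[OF dA] by blast+
      show "Vector_Spaces.linear s (*) (\<lambda>x. d x y - d y x)"
        using l1 unfolding Vector_Spaces.linear_iff by (simp add: algebra_simps)
    qed
    have cyc: "v_map d (br x y) z = v_map d (br z x) y" for x y z
    proof -
      have e1: "d (br x y) z = d y (br x z) - d x (br y z)" using AD[OF dA] by blast
      have e2: "d (br z x) y = d x (br z y) - d z (br x y)" using AD[OF dA] by blast
      have e3: "d y (br z x) = - d y (br x z)" using gskew[OF dA] by blast
      have e4: "d x (br z y) = - d x (br y z)" using gskew[OF dA] by blast
      show ?thesis unfolding v_map_def using e1 e2 e3 e4 by (simp add: algebra_simps)
    qed
    show ?thesis unfolding cyclic_forms_def using bil cyc by (simp add: v_map_def)
  qed
  have P6: "d \<in> Z2comm s br" if dA: "d \<in> ADer_coad s br" and v0: "v_map d = (\<lambda>x y. 0)" for d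
  proof -
    have sym: "\<And>x y. d x y = d y x" using v0 unfolding v_map_def by (metis eq_iff_diff_eq_0)
    have bil: "bilinear_form s d" unfolding bilinear_form_def using AD[OF dA] by blast
    have coc: "d (br x y) z + d (br z x) y + d (br y z) x = 0" for x y z
    proof -
      have "d (br x y) z = d z (br x y)" "d (br z x) y = d y (br z x)" "d (br y z) x = d x (br y z)"
        using sym by blast+
      moreover have "d (br x y) z = d y (br x z) - d x (br y z)" using AD[OF dA] by blast
      moreover have "d y (br z x) = - d y (br x z)" using gskew[OF dA] by blast
      ultimately show ?thesis by (simp add: algebra_simps)
    qed
    show ?thesis unfolding Z2comm_def using bil sym coc by blast
  qed
  have P6b: "v_map \<phi> = (\<lambda>x y. 0)" if "\<phi> \<in> Z2comm s br" for \<phi>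
    using that unfolding Z2comm_def v_map_def by (simp add: fun_eq_iff)
  show ?thesis
  proof (intro conjI ballI allI)
    show "\<And>\<phi>. \<phi> \<in> Z2comm s br \<Longrightarrow> u_map \<phi> \<in> ADer_coad s br" by (subst uid) (rule P1)
    show "\<And>d. d \<in> ADer_coad s br \<Longrightarrow> v_map d \<in> cyclic_forms s br" using P2 by blast
    show "\<And>a b \<phi> \<psi>. u_map (\<lambda>x y. a * \<phi> x y + b * \<psi> x y) = (\<lambda>x y. a * u_map \<phi> x y + b * u_map \<psi> x y)"
      by (simp add: u_map_def)
    show "\<And>(a::'k) b d e. v_map (\<lambda>x y. a * d x y + b * e x y) = (\<lambda>x y. a * v_map d x y + b * v_map e x y)"
      unfolding v_map_def by (rule ext)+ (simp add: algebra_simps)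
    show "inj_on u_map (Z2comm s br)" by (simp add: inj_on_def uid)
    show "u_map ` Z2comm s br = {d \<in> ADer_coad s br. v_map d = (\<lambda>x y. 0)}"
      using P1 P6 P6b by (auto simp: uid)
  qed
qed

end
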